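(* Assume $M$ has genus zero and $a+b\neq1$. Then the marginal law of $\omega$ under $\mathbf P$ is $$\mathbf P(\omega)\propto q^{k(\omega)}\Big(\frac{1-(1-q')a-b}{b}\Big)^{|\omega|}Z_{(\mathsf V,\omega),q'}\Big(\frac{q'a}{1-a-b}\Big),\qquad\omega\subseteq\mathsf E.$$
   Context: $M$ is the sphere or the plane. Let $\mathsf G=(\mathsf V,\mathsf E)$ be a finite connected graph embedded in $M$ with all faces topological discs, and $\mathsf G^*=(\mathsf U,\mathsf E^* )$ its embedded dual ($\mathsf U$ = faces of $\mathsf G$); $e^*$ is the dual edge crossing $e$, $\xi^*=\{e^*:e\in\xi\}$. Fix integers $q,q'\ge1$, finite $Q,Q'\subset\mathbb C$ with $Q=-Q$, $Q'=-Q'$, $|Q|=q$, $|Q'|=q'$, and $a,b\in(0,1]$. For $\sigma:\mathsf V\to Q$, $\eta(\sigma)\subseteq\mathsf E^*$ is the set of $e^*$ whose primal $e$ has endpoints with different $\sigma$-values; for $\sigma':\mathsf U\to Q'$, $\eta(\sigma')\subseteq\mathsf E$ is the set of $e$ whose dual $e^*$ has endpoints with different $\sigma'$-values. $\mathbf P(\sigma,\sigma')\propto a^{|\eta(\sigma')|}b^{|\eta(\sigma)|}$ on $\Sigma=\{(\sigma,\sigma'):\eta(\sigma)^*\cap\eta(\sigma')=\emptyset\}$. Percolation: given $(\sigma,\sigma')$, every edge of $\eta(\sigma')$ and every dual edge of $\eta(\sigma)$ is open; for each pair $(e,e^* )$ with $e\notin\eta(\sigma')$, $e^*\notin\eta(\sigma)$,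 independently: if $a+b\le1$, ($e$ open, $e^*$ closed) w.p. $a$, ($e$ closed, $e^*$ open) w.p. $b$, both open w.p. $1-a-b$; if $a+b\ge1$, ($e$ open, $e^*$ closed) w.p. $1-b$, ($e$ closed, $e^*$ open) w.p. $1-a$, both closed w.p. $a+b-1$. $\omega$ is the set of open primal edges; $\mathbf P$ is the joint law. $k(\omega)$ is the number of connected components of $(\mathsf V,\omega)$, isolated vertices included. For a finite graph $G=(V,E)$ and $x\neq-1$, $Z_{G,q'}(x)=\sum_{s\in Q'^V}(1+x)^{-n(s)}$ where $n(s)$ is the number of edges whose endpoints get different spins (Potts partition function with $e^J=1+x$, possibly with $1+x<0$). *)

theory Defs
  imports Complex_Main "HOL-Combinatorics.Permutations" "HOL-Library.FuncSet"
begin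

text \<open>Combinatorial encoding of a cellularly embedded connected graph on an orientable
surface (combinatorial map): darts D, fixed-point-free involution alpha (edges),
rotation rho (vertices = rho-orbits), faces = orbits of rho o alpha. Genus zero is Euler's formula.\<close>

definition same_orbit :: "('d \<Rightarrow> 'd) \<Rightarrow> 'd \<Rightarrow> 'd \<Rightarrow> bool" where
  "same_orbit f x y \<longleftrightarrow> (\<exists>n. (f ^^ n) x = y)"

definition map_edges :: "'d set \<Rightarrow> ('d \<Rightarrow> 'd) \<Rightarrow> 'd set set" where
  "map_edges D alpha = {{d, alpha d} | d. d \<in> D}"

definition genus0_map ::
  "'d set \<Rightarrow> ('d \<Rightarrow> 'd) \<Rightarrow> ('d \<Rightarrow> 'd) \<Rightarrow> 'v set \<Rightarrow> ('d \<Rightarrow> 'v) \<Rightarrow> 'u set \<Rightarrow> ('d \<Rightarrow> 'u) \<Rightarrow> bool" where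
  "genus0_map D alpha rho V vert U fc \<longleftrightarrow>
     finite D \<and> finite V \<and> finite U \<and>
     alpha permutes D \<and> (\<forall>d\<in>D. alpha d \<noteq> d \<and> alpha (alpha d) = d) \<and>
     rho permutes D \<and>
     (\<forall>d\<in>D. vert d \<in> V \<and> fc d \<in> U) \<and>
     (\<forall>d\<in>D. \<forall>d'\<in>D. vert d = vert d' \<longleftrightarrow> same_orbit rho d d') \<and>
     (\<forall>d\<in>D. \<forall>d'\<in>D. fc d = fc d' \<longleftrightarrow> same_orbit (rho \<circ> alpha) d d') \<and>
     (if D = {} then card V = 1 \<and> card U = 1
      else vert ` D = V \<and> fc ` D = U \<and>
           (\<forall>d\<in>D. \<forall>d'\<in>D. (d, d') \<in> ({(x, alpha x) | x. True} \<union> {(x, rho x) | x. True})\<^sup>*)) \<and>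
     int (card V) - int (card (map_edges D alpha)) + int (card U) = 2"

text \<open>Edges whose two endpoints (under the labelling lab) receive different spins.
With lab = vert this is the set of e whose dual e* lies in eta(sigma);
with lab = fc (faces) it is eta(sigma').\<close>
definition disagree :: "'d set set \<Rightarrow> ('d \<Rightarrow> 'x) \<Rightarrow> ('x \<Rightarrow> complex) \<Rightarrow> 'd set set" where
  "disagree F lab s = {e \<in> F. \<exists>x\<in>e. \<exists>y\<in>e. s (lab x) \<noteq> s (lab y)}"

definition potts_Z :: "'v set \<Rightarrow> 'd set set \<Rightarrow> ('d \<Rightarrow> 'v) \<Rightarrow> complex set \<Rightarrow> real \<Rightarrow> real" where
  "potts_Z V F lab Q' x = (\<Sum>s \<in> V \<rightarrow>\<^sub>E Q'. inverse ((1 + x) ^ card (disagree F lab s)))"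

definition num_components :: "'v set \<Rightarrow> 'd set set \<Rightarrow> ('d \<Rightarrow> 'v) \<Rightarrow> nat" where
  "num_components V w lab =
     card (V // ({(u, v). \<exists>e\<in>w. u \<in> lab ` e \<and> v \<in> lab ` e})\<^sup>*)"

text \<open>Law of the state (e open?, e* open?) of a pair not forced by the spins.\<close>
definition free_pair_prob :: "real \<Rightarrow> real \<Rightarrow> bool \<Rightarrow> bool \<Rightarrow> real" where
  "free_pair_prob a b eo du =
    (if a + b \<le> 1 then
       (if eo \<and> \<not> du then a else if \<not> eo \<and> du then b else if eo \<and> du then 1 - a - b else 0)
     else
       (if eo \<and> \<not> du then 1 - b else if \<not> eo \<and> du then 1 - a else if \<not> eo \<and> \<not> du then a + b - 1 else 0))"

definition spin_configs ::
  "'d set set \<Rightarrow> 'v set \<Rightarrow> ('d \<Rightarrow> 'v) \<Rightarrow> 'u set \<Rightarrow> ('d \<Rightarrow> 'u) \<Rightarrow> complex set \<Rightarrow> complex set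
   \<Rightarrow> (('v \<Rightarrow> complex) \<times> ('u \<Rightarrow> complex)) set" where
  "spin_configs E V vert U fc Q Q' =
     {(s, t). s \<in> V \<rightarrow>\<^sub>E Q \<and> t \<in> U \<rightarrow>\<^sub>E Q' \<and> disagree E vert s \<inter> disagree E fc t = {}}"

definition spin_weight ::
  "'d set set \<Rightarrow> ('d \<Rightarrow> 'v) \<Rightarrow> ('d \<Rightarrow> 'u) \<Rightarrow> real \<Rightarrow> real \<Rightarrow> ('v \<Rightarrow> complex) \<Rightarrow> ('u \<Rightarrow> complex) \<Rightarrow> real" where
  "spin_weight E vert fc a b s t = a ^ card (disagree E fc t) * b ^ card (disagree E vert s)"

text \<open>Conditional probability of (omega, omega-dual) given the spins; omega-dual is
represented by the set of primal edges e whose dual e* is open.\<close>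
definition perc_cond ::
  "'d set set \<Rightarrow> ('d \<Rightarrow> 'v) \<Rightarrow> ('d \<Rightarrow> 'u) \<Rightarrow> real \<Rightarrow> real \<Rightarrow> ('v \<Rightarrow> complex) \<Rightarrow> ('u \<Rightarrow> complex)
   \<Rightarrow> 'd set set \<Rightarrow> 'd set set \<Rightarrow> real" where
  "perc_cond E vert fc a b s t w wd =
     (\<Prod>e\<in>E. if e \<in> disagree E fc t then (if e \<in> w \<and> e \<notin> wd then 1 else 0)
             else if e \<in> disagree E vert s then (if e \<notin> w \<and> e \<in> wd then 1 else 0)
             else free_pair_prob a b (e \<in> w) (e \<in> wd))"

definition omega_marginal ::
  "'d set set \<Rightarrow> 'v set \<Rightarrow> ('d \<Rightarrow> 'v) \<Rightarrow> 'u set \<Rightarrow> ('d \<Rightarrow> 'u) \<Rightarrow> complex set \<Rightarrow> complex set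
   \<Rightarrow> real \<Rightarrow> real \<Rightarrow> 'd set set \<Rightarrow> real" where
  "omega_marginal E V vert U fc Q Q' a b w =
     (\<Sum>(s, t) \<in> spin_configs E V vert U fc Q Q'. \<Sum>wd \<in> Pow E.
        spin_weight E vert fc a b s t * perc_cond E vert fc a b s t w wd)
     / (\<Sum>(s, t) \<in> spin_configs E V vert U fc Q Q'. spin_weight E vert fc a b s t)"

end

theory Submission
  imports Defs
begin


definition crel :: "'d set set \<Rightarrow> ('d \<Rightarrow> 'v) \<Rightarrow> ('v \<times> 'v) set" where
  "crel F lab = {(u, v). \<exists>e\<in>F. u \<in> lab ` e \<and> v \<in> lab ` e}"

lemma nc_def2: "num_components V F lab = card (V // (crel F lab)\<^sup>*)"
  unfolding num_components_def crel_def by simp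

lemma sym_crel: "sym ((crel F lab)\<^sup>*)"
  by (rule sym_rtrancl) (auto simp: sym_def crel_def)

lemma crel_sym: "(x, y) \<in> (crel F lab)\<^sup>* \<Longrightarrow> (y, x) \<in> (crel F lab)\<^sup>*"
  using sym_crel by (metis symD)

lemma crel_V:
  assumes "\<forall>e\<in>F. lab ` e \<subseteq> V" "(x, y) \<in> (crel F lab)\<^sup>*" "x \<in> V"
  shows "y \<in> V"
  using assms(2,3)
proof (induction rule: rtrancl_induct)
  case base then show ?case .
next
  case (step y z) then show ?case using assms(1) by (auto simp: crel_def)
qed

lemma class_eq:
  assumes "(x, y) \<in> (crel F lab)\<^sup>*"
  shows "(crel F lab)\<^sup>*`` {x} = (crel F lab)\<^sup>*`` {y}"
  using assms crel_sym rtrancl_trans by (metis Image_singleton_iff subsetI subset_antisym)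

lemma nc_empty: "num_components V {} lab = card V"
proof -
  have "crel {} lab = {}" by (simp add: crel_def)
  then have "V // (crel {} lab)\<^sup>* = (\<lambda>x. {x}) ` V" by (auto simp: quotient_def)
  moreover have "card ((\<lambda>x. {x}) ` V) = card V" by (rule card_image) (auto simp: inj_on_def)
  ultimately show ?thesis by (simp add: nc_def2)
qed

lemma nc_insert:
  assumes fin: "finite V" and FV: "\<forall>e\<in>F. lab ` e \<subseteq> V" and x0: "lab d0 \<in> V" and y0: "lab d1 \<in> V"
  shows "num_components V (insert {d0, d1} F) lab
          + (if (lab d0, lab d1) \<in> (crel F lab)\<^sup>* then 0 else 1) = num_components V F lab"
proof -
  define R where "R = crel F lab"
  define R' where "R' = crel (insert {d0, d1} F) lab"
  define x where "x = lab d0"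
  define y where "y = lab d1"
  have R'eq: "R' = R \<union> {x, y} \<times> {x, y}" unfolding R'_def R_def crel_def x_def y_def by auto
  have symR: "\<And>u v. (u, v) \<in> R\<^sup>* \<Longrightarrow> (v, u) \<in> R\<^sup>*" unfolding R_def by (rule crel_sym)
  show ?thesis
  proof (cases "(x, y) \<in> R\<^sup>*")
    case True
    have "R' \<subseteq> R\<^sup>*" using True symR unfolding R'eq by auto
    then have "R'\<^sup>* \<subseteq> R\<^sup>*" by (metis rtrancl_subset_rtrancl)
    moreover have "R\<^sup>* \<subseteq> R'\<^sup>*" unfolding R'eq by (rule rtrancl_mono) auto
    ultimately have "R'\<^sup>* = R\<^sup>*" by auto
    then show ?thesis using True by (simp add: nc_def2 R_def R'_def x_def y_def)
  next
    case False
    define cx where "cx = R\<^sup>* `` {x}"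
    define cy where "cy = R\<^sup>* `` {y}"
    define M where "M = cx \<union> cy"
    have Mclosed: "\<And>u v. u \<in> M \<Longrightarrow> (u, v) \<in> R\<^sup>* \<Longrightarrow> v \<in> M"
      unfolding M_def cx_def cy_def by (auto intro: rtrancl_trans)
    have Mclosed2: "\<And>u v. v \<in> M \<Longrightarrow> (u, v) \<in> R\<^sup>* \<Longrightarrow> u \<in> M"
      using Mclosed symR by blast
    have xM: "x \<in> M" "y \<in> M" unfolding M_def cx_def cy_def by auto
    have char: "R'\<^sup>* = R\<^sup>* \<union> M \<times> M"
    proof
      show "R'\<^sup>* \<subseteq> R\<^sup>* \<union> M \<times> M"
      proof
        fix p assume "p \<in> R'\<^sup>*"
        then obtain u v where p: "p = (u, v)" "(u, v) \<in> R'\<^sup>*" by (cases p) auto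
        from p(2) have "(u, v) \<in> R\<^sup>* \<union> M \<times> M"
        proof (induction rule: rtrancl_induct)
          case base then show ?case by simp
        next
          case (step v w)
          from step.hyps(2) have "(v, w) \<in> R \<or> (v \<in> M \<and> w \<in> M)" unfolding R'eq using xM by auto
          then show ?case
          proof
            assume vw: "(v, w) \<in> R"
            from step.IH show ?thesis
            proof
              assume "(u, v) \<in> R\<^sup>*" then show ?thesis using vw by (simp add: rtrancl.rtrancl_into_rtrancl)
            next
              assume "(u, v) \<in> M \<times> M" then show ?thesis using vw Mclosed by blast
            qed
          next
            assume vw: "v \<in> M \<and> w \<in> M"
            from step.IH show ?thesis
            proof
              assume "(u, v) \<in> R\<^sup>*" then show ?thesis using vw Mclosed2 by blast
            next
              assume "(u, v) \<in> M \<times> M" then show ?thesis using vw by blast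
            qed
          qed
        qed
        then show "p \<in> R\<^sup>* \<union> M \<times> M" using p by simp
      qed
    next
      have "R\<^sup>* \<subseteq> R'\<^sup>*" unfolding R'eq by (rule rtrancl_mono) auto
      moreover have "M \<times> M \<subseteq> R'\<^sup>*"
      proof
        fix p assume "p \<in> M \<times> M"
        then obtain u v where p: "p = (u, v)" "u \<in> M" "v \<in> M" by auto
        have xy: "(x, y) \<in> R'\<^sup>*" "(y, x) \<in> R'\<^sup>*" unfolding R'eq by auto
        have "(u, x) \<in> R'\<^sup>* \<or> (u, y) \<in> R'\<^sup>*"
          using p(2) symR \<open>R\<^sup>* \<subseteq> R'\<^sup>*\<close> unfolding M_def cx_def cy_def by blast
        then have ux: "(u, x) \<in> R'\<^sup>*" using xy by (meson rtrancl_trans)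
        have "(x, v) \<in> R'\<^sup>* \<or> (y, v) \<in> R'\<^sup>*"
          using p(3) \<open>R\<^sup>* \<subseteq> R'\<^sup>*\<close> unfolding M_def cx_def cy_def by blast
        then have xv: "(x, v) \<in> R'\<^sup>*" using xy by (meson rtrancl_trans)
        show "p \<in> R'\<^sup>*" using ux xv p(1) by (meson rtrancl_trans)
      qed
      ultimately show "R\<^sup>* \<union> M \<times> M \<subseteq> R'\<^sup>*" by blast
    qed
    have cls: "\<And>u. R'\<^sup>* `` {u} = (if u \<in> M then M else R\<^sup>* `` {u})"
      using Mclosed unfolding char by auto
    have inM: "\<And>u. u \<in> M \<Longrightarrow> R\<^sup>* `` {u} = cx \<or> R\<^sup>* `` {u} = cy"
      unfolding M_def cx_def cy_def using class_eq[of _ _ F lab] symR unfolding R_def by blast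
    have notM: "\<And>u. u \<notin> M \<Longrightarrow> R\<^sup>* `` {u} \<noteq> cx \<and> R\<^sup>* `` {u} \<noteq> cy"
      unfolding M_def by blast
    have MV: "M \<subseteq> V" unfolding M_def cx_def cy_def R_def x_def y_def
      using crel_V[OF FV] x0 y0 by blast
    have P: "V // R\<^sup>* = insert cx (insert cy ((\<lambda>u. R\<^sup>* `` {u}) ` (V - M)))"
      unfolding quotient_def using inM MV xM unfolding cx_def cy_def by blast
    have P': "V // R'\<^sup>* = insert M ((\<lambda>u. R\<^sup>* `` {u}) ` (V - M))"
    proof -
      have "V // R'\<^sup>* = (\<lambda>u. R'\<^sup>* `` {u}) ` V" unfolding quotient_def by blast
      also have "\<dots> = (\<lambda>u. R'\<^sup>* `` {u}) ` M \<union> (\<lambda>u. R'\<^sup>* `` {u}) ` (V - M)"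
        using MV by blast
      also have "(\<lambda>u. R'\<^sup>* `` {u}) ` M = {M}" using cls xM by auto
      also have "(\<lambda>u. R'\<^sup>* `` {u}) ` (V - M) = (\<lambda>u. R\<^sup>* `` {u}) ` (V - M)"
        using cls by auto
      finally show ?thesis by simp
    qed
    have cxy: "cx \<noteq> cy" using False symR unfolding cx_def cy_def by blast
    have fin1: "finite ((\<lambda>u. R\<^sup>* `` {u}) ` (V - M))" using fin by simp
    have n1: "cx \<notin> (\<lambda>u. R\<^sup>* `` {u}) ` (V - M)" "cy \<notin> (\<lambda>u. R\<^sup>* `` {u}) ` (V - M)"
      using notM by blast+
    have n2: "M \<notin> (\<lambda>u. R\<^sup>* `` {u}) ` (V - M)"
    proof
      assume "M \<in> (\<lambda>u. R\<^sup>* `` {u}) ` (V - M)"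
      then obtain u where "u \<in> V - M" "M = R\<^sup>* `` {u}" by auto
      then show False by auto
    qed
    have "card (V // R\<^sup>*) = card ((\<lambda>u. R\<^sup>* `` {u}) ` (V - M)) + 2"
      unfolding P using fin1 n1 cxy by simp
    moreover have "card (V // R'\<^sup>*) = card ((\<lambda>u. R\<^sup>* `` {u}) ` (V - M)) + 1"
      unfolding P' using fin1 n2 by simp
    ultimately show ?thesis using False by (simp add: nc_def2 R_def R'_def x_def y_def)
  qed
qed



lemma const_on_rtrancl:
  assumes "\<forall>e\<in>F. \<forall>x\<in>e. \<forall>y\<in>e. s (lab x) = s (lab y)" "(u, v) \<in> (crel F lab)\<^sup>*"
  shows "s u = s v"
  using assms(2)
proof (induction rule: rtrancl_induct)
  case base then show ?case by simp
next
  case (step v w) then show ?case using assms(1) by (auto simp: crel_def)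
qed

lemma count_agree:
  fixes V :: "'v set" and lab :: "'d \<Rightarrow> 'v" and Q :: "'c set"
  assumes fin: "finite V" and FV: "\<forall>e\<in>F. lab ` e \<subseteq> V" and finQ: "finite Q"
  shows "card {s \<in> V \<rightarrow>\<^sub>E Q. \<forall>e\<in>F. \<forall>x\<in>e. \<forall>y\<in>e. s (lab x) = s (lab y)}
         = card Q ^ num_components V F lab"
proof -
  define R where "R = crel F lab"
  define P where "P = V // R\<^sup>*"
  define S where "S = {s \<in> V \<rightarrow>\<^sub>E Q. \<forall>e\<in>F. \<forall>x\<in>e. \<forall>y\<in>e. s (lab x) = s (lab y)}"
  define g where "g = (\<lambda>h::'v set \<Rightarrow> 'c. \<lambda>v\<in>V. h (R\<^sup>* `` {v}))"
  have finP: "finite P" unfolding P_def quotient_def using fin by simp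
  have cardP: "card (P \<rightarrow>\<^sub>E Q) = card Q ^ card P"
    using card_PiE[OF finP, of "\<lambda>_. Q"] by simp
  have symR: "\<And>u v. (u, v) \<in> R\<^sup>* \<Longrightarrow> (v, u) \<in> R\<^sup>*" unfolding R_def by (rule crel_sym)
  have inj: "inj_on g (P \<rightarrow>\<^sub>E Q)"
  proof (rule inj_onI)
    fix h1 h2 assume h: "h1 \<in> P \<rightarrow>\<^sub>E Q" "h2 \<in> P \<rightarrow>\<^sub>E Q" "g h1 = g h2"
    have ex: "h1 \<in> extensional P" "h2 \<in> extensional P" using h(1,2) by (auto simp: PiE_iff)
    show "h1 = h2"
    proof (rule extensionalityI[OF ex])
      fix c assume "c \<in> P"
      then obtain v where v: "v \<in> V" "c = R\<^sup>* `` {v}" unfolding P_def quotient_def by blast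
      have "g h1 v = g h2 v" using h(3) by simp
      then show "h1 c = h2 c" using v unfolding g_def by simp
    qed
  qed
  have img: "g ` (P \<rightarrow>\<^sub>E Q) = S"
  proof
    show "g ` (P \<rightarrow>\<^sub>E Q) \<subseteq> S"
    proof
      fix s assume "s \<in> g ` (P \<rightarrow>\<^sub>E Q)"
      then obtain h where h: "h \<in> P \<rightarrow>\<^sub>E Q" "s = g h" by blast
      have "s \<in> V \<rightarrow>\<^sub>E Q"
      proof
        fix v assume "v \<in> V"
        then have "R\<^sup>* `` {v} \<in> P" unfolding P_def quotient_def by blast
        then have "h (R\<^sup>* `` {v}) \<in> Q" using h(1) by (rule PiE_mem[rotated])
        then show "s v \<in> Q" using h(2) \<open>v \<in> V\<close> unfolding g_def by simp
      next
        fix v assume "v \<notin> V" then show "s v = undefined" using h unfolding g_def by simp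
      qed
      moreover have "\<forall>e\<in>F. \<forall>x\<in>e. \<forall>y\<in>e. s (lab x) = s (lab y)"
      proof (intro ballI)
        fix e x y assume exy: "e \<in> F" "x \<in> e" "y \<in> e"
        then have "lab x \<in> V" "lab y \<in> V" using FV by auto
        moreover have "(lab x, lab y) \<in> R\<^sup>*" using exy unfolding R_def crel_def by blast
        then have "R\<^sup>* `` {lab x} = R\<^sup>* `` {lab y}" unfolding R_def by (rule class_eq)
        ultimately show "s (lab x) = s (lab y)" using h(2) unfolding g_def by simp
      qed
      ultimately show "s \<in> S" unfolding S_def by blast
    qed
  next
    show "S \<subseteq> g ` (P \<rightarrow>\<^sub>E Q)"
    proof
      fix s assume sS: "s \<in> S"
      have cst: "\<And>u v. (u, v) \<in> R\<^sup>* \<Longrightarrow> s u = s v"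
      proof -
        fix u v assume uv: "(u, v) \<in> R\<^sup>*"
        have agr: "\<forall>e\<in>F. \<forall>x\<in>e. \<forall>y\<in>e. s (lab x) = s (lab y)" using sS unfolding S_def by blast
        show "s u = s v" using const_on_rtrancl[of F s lab, OF agr] uv unfolding R_def by blast
      qed
      define h where "h = (\<lambda>c\<in>P. s (SOME v. v \<in> c))"
      have hv: "\<And>v. v \<in> V \<Longrightarrow> h (R\<^sup>* `` {v}) = s v"
      proof -
        fix v assume v: "v \<in> V"
        have cP: "R\<^sup>* `` {v} \<in> P" unfolding P_def quotient_def using v by blast
        have "v \<in> R\<^sup>* `` {v}" by simp
        then have "(SOME u. u \<in> R\<^sup>* `` {v}) \<in> R\<^sup>* `` {v}" by (rule someI)
        then have "(v, SOME u. u \<in> R\<^sup>* `` {v}) \<in> R\<^sup>*" by simp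
        then have "s (SOME u. u \<in> R\<^sup>* `` {v}) = s v" using cst by metis
        then show "h (R\<^sup>* `` {v}) = s v" using cP unfolding h_def by simp
      qed
      have "h \<in> P \<rightarrow>\<^sub>E Q"
      proof
        fix c assume "c \<in> P"
        then obtain v where v: "v \<in> V" "c = R\<^sup>* `` {v}" unfolding P_def quotient_def by blast
        have "s v \<in> Q" using sS v(1) unfolding S_def by (blast intro: PiE_mem)
        then show "h c \<in> Q" using hv[OF v(1)] v(2) by simp
      next
        fix c assume "c \<notin> P" then show "h c = undefined" unfolding h_def by simp
      qed
      moreover have "g h = s"
      proof
        fix v show "g h v = s v"
        proof (cases "v \<in> V")
          case True then show ?thesis using hv unfolding g_def by simp
        next
          case False then show ?thesis using sS unfolding g_def S_def by (auto simp: PiE_iff extensional_def)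
        qed
      qed
      ultimately show "s \<in> g ` (P \<rightarrow>\<^sub>E Q)" by blast
    qed
  qed
  have "card S = card (P \<rightarrow>\<^sub>E Q)" using card_image[OF inj] img by simp
  then show ?thesis using cardP unfolding S_def P_def R_def by (simp add: nc_def2)
qed



locale g0 =
  fixes D :: "'d set" and alpha rho :: "'d \<Rightarrow> 'd"
    and V :: "'v set" and vert :: "'d \<Rightarrow> 'v" and U :: "'u set" and fc :: "'d \<Rightarrow> 'u"
  assumes map: "genus0_map D alpha rho V vert U fc"
begin

abbreviation "E \<equiv> map_edges D alpha"

lemma finD: "finite D" and finV: "finite V" and finU: "finite U"
  using map unfolding genus0_map_def by auto

lemma aD: "x \<in> D \<Longrightarrow> alpha x \<in> D"
  using map unfolding genus0_map_def by (meson permutes_in_image)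
lemma rD: "x \<in> D \<Longrightarrow> rho x \<in> D"
  using map unfolding genus0_map_def by (meson permutes_in_image)
lemma aa: "x \<in> D \<Longrightarrow> alpha (alpha x) = x"
  using map unfolding genus0_map_def by auto
lemma an: "x \<in> D \<Longrightarrow> alpha x \<noteq> x"
  using map unfolding genus0_map_def by auto
lemma rinj: "rho x = rho y \<Longrightarrow> x = y"
  using map unfolding genus0_map_def by (meson permutes_inj injD)
lemma ainj: "alpha x = alpha y \<Longrightarrow> x = y"
  using map unfolding genus0_map_def by (meson permutes_inj injD)
lemma vV: "x \<in> D \<Longrightarrow> vert x \<in> V"
  using map unfolding genus0_map_def by auto
lemma fU: "x \<in> D \<Longrightarrow> fc x \<in> U"
  using map unfolding genus0_map_def by auto
lemma vr: "x \<in> D \<Longrightarrow> vert (rho x) = vert x"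
proof -
  assume x: "x \<in> D"
  have "same_orbit rho x (rho x)" unfolding same_orbit_def by (rule exI[of _ 1]) simp
  then show ?thesis using map x rD[OF x] unfolding genus0_map_def by metis
qed
lemma fra: "x \<in> D \<Longrightarrow> fc (rho (alpha x)) = fc x"
proof -
  assume x: "x \<in> D"
  have "same_orbit (rho \<circ> alpha) x (rho (alpha x))" unfolding same_orbit_def by (rule exI[of _ 1]) simp
  then show ?thesis using map x rD[OF aD[OF x]] unfolding genus0_map_def by metis
qed
lemma fr: "x \<in> D \<Longrightarrow> fc (rho x) = fc (alpha x)"
  using fra[OF aD] aa by metis

lemma E_iff: "e \<in> E \<longleftrightarrow> (\<exists>d\<in>D. e = {d, alpha d})"
  unfolding map_edges_def by auto
lemma finE: "finite E"
  unfolding map_edges_def using finD by simp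
lemma EV: "\<forall>e\<in>E. vert ` e \<subseteq> V"
  using E_iff vV aD by auto
lemma EU: "\<forall>e\<in>E. fc ` e \<subseteq> U"
  using E_iff fU aD by auto

lemma tau_lemma:
  assumes AE: "A \<subseteq> E" and d: "d \<in> D" and eA: "{d, alpha d} \<notin> A"
    and nc: "(vert d, vert (alpha d)) \<notin> (crel A vert)\<^sup>*"
  shows "(fc d, fc (alpha d)) \<in> (crel (E - insert {d, alpha d} A) fc)\<^sup>*"
proof -
  define C where "C = (crel A vert)\<^sup>* `` {vert d}"
  define X where "X = {x \<in> D. vert x \<in> C}"
  define tau where "tau = (\<lambda>x. if alpha x \<in> X then rho (alpha x) else rho x)"
  define R' where "R' = crel (E - insert {d, alpha d} A) fc"
  have dX: "d \<in> X" unfolding X_def C_def using d by simp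
  have adX: "alpha d \<notin> X" unfolding X_def C_def using nc by simp
  have finX: "finite X" unfolding X_def using finD by simp
  have tX: "\<And>x. x \<in> X \<Longrightarrow> tau x \<in> X"
  proof -
    fix x assume x: "x \<in> X"
    show "tau x \<in> X"
    proof (cases "alpha x \<in> X")
      case True then show ?thesis unfolding tau_def X_def using rD vr by auto
    next
      case False then show ?thesis unfolding tau_def X_def using x rD vr unfolding X_def by auto
    qed
  qed
  have tinj: "inj_on tau X"
  proof (rule inj_onI)
    fix x y assume xy: "x \<in> X" "y \<in> X" "tau x = tau y"
    have xD: "x \<in> D" "y \<in> D" using xy unfolding X_def by auto
    show "x = y"
    proof (cases "alpha x \<in> X"; cases "alpha y \<in> X")
      assume "alpha x \<in> X" "alpha y \<in> X"
      then show ?thesis using xy(3) unfolding tau_def by (auto dest: rinj ainj)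
    next
      assume "alpha x \<notin> X" "alpha y \<notin> X"
      then show ?thesis using xy(3) unfolding tau_def by (auto dest: rinj)
    next
      assume h: "alpha x \<in> X" "alpha y \<notin> X"
      then have "alpha x = y" using xy(3) unfolding tau_def by (auto dest: rinj)
      then show ?thesis using h aa xD xy by auto
    next
      assume h: "alpha x \<notin> X" "alpha y \<in> X"
      then have "x = alpha y" using xy(3) unfolding tau_def by (auto dest: rinj)
      then show ?thesis using h aa xD xy by auto
    qed
  qed
  have tnX: "\<And>n x. x \<in> X \<Longrightarrow> (tau ^^ n) x \<in> X"
  proof -
    fix n x assume "x \<in> X" then show "(tau ^^ n) x \<in> X" by (induction n) (auto intro: tX)
  qed
  have tninj: "\<And>k x y. x \<in> X \<Longrightarrow> y \<in> X \<Longrightarrow> (tau ^^ k) x = (tau ^^ k) y \<Longrightarrow> x = y"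
  proof -
    fix k show "\<And>x y. x \<in> X \<Longrightarrow> y \<in> X \<Longrightarrow> (tau ^^ k) x = (tau ^^ k) y \<Longrightarrow> x = y"
    proof (induction k)
      case 0 then show ?case by simp
    next
      case (Suc k)
      have "(tau ^^ k) (tau x) = (tau ^^ k) (tau y)" using Suc.prems(3) by (simp add: funpow_Suc_right del: funpow.simps)
      then have "tau x = tau y" using Suc.IH tX Suc.prems by blast
      then show ?case using tinj Suc.prems by (meson inj_onD)
    qed
  qed
  have ex: "\<exists>n. 0 < n \<and> (tau ^^ n) d = d"
  proof -
    have "\<not> inj_on (\<lambda>n. (tau ^^ n) d) {0..card X}"
    proof
      assume "inj_on (\<lambda>n. (tau ^^ n) d) {0..card X}"
      moreover have "(\<lambda>n. (tau ^^ n) d) ` {0..card X} \<subseteq> X" using tnX dX by auto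
      ultimately have "card {0..card X} \<le> card X" using card_inj_on_le finX by blast
      then show False by simp
    qed
    then obtain i j where ij: "i \<in> {0..card X}" "j \<in> {0..card X}" "i \<noteq> j" "(tau ^^ i) d = (tau ^^ j) d"
      unfolding inj_on_def by blast
    show ?thesis
    proof (cases "i < j")
      case True
      have "(tau ^^ i) ((tau ^^ (j - i)) d) = (tau ^^ i) d"
        using ij(4) True by (metis funpow_add le_add_diff_inverse less_imp_le o_apply)
      then have "(tau ^^ (j - i)) d = d" using tninj tnX dX by blast
      then show ?thesis using True by (intro exI[of _ "j - i"]) simp
    next
      case False
      then have ji: "j < i" using ij(3) by simp
      have "(tau ^^ j) ((tau ^^ (i - j)) d) = (tau ^^ j) d"
        using ij(4) ji by (metis funpow_add le_add_diff_inverse less_imp_le o_apply)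
      then have "(tau ^^ (i - j)) d = d" using tninj tnX dX by blast
      then show ?thesis using ji by (intro exI[of _ "i - j"]) simp
    qed
  qed
  define m where "m = (LEAST n. 0 < n \<and> (tau ^^ n) d = d)"
  have m: "0 < m" "(tau ^^ m) d = d" using LeastI_ex[OF ex] unfolding m_def by auto
  have mmin: "\<And>i. 0 < i \<Longrightarrow> i < m \<Longrightarrow> (tau ^^ i) d \<noteq> d"
    using not_less_Least unfolding m_def by blast
  have t1: "fc (tau d) = fc (alpha d)" unfolding tau_def using adX fr[OF d] by simp
  have chain: "\<And>i. 1 \<le> i \<Longrightarrow> i \<le> m \<Longrightarrow> (fc (alpha d), fc ((tau ^^ i) d)) \<in> R'\<^sup>*"
  proof -
    fix i show "1 \<le> i \<Longrightarrow> i \<le> m \<Longrightarrow> (fc (alpha d), fc ((tau ^^ i) d)) \<in> R'\<^sup>*"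
    proof (induction i)
      case 0 then show ?case by simp
    next
      case (Suc i)
      show ?case
      proof (cases "i = 0")
        case True then show ?thesis using t1 by simp
      next
        case False
        define z where "z = (tau ^^ i) d"
        have zX: "z \<in> X" unfolding z_def using tnX dX by blast
        have zD: "z \<in> D" using zX unfolding X_def by simp
        have zd: "z \<noteq> d" unfolding z_def using mmin False Suc.prems by simp
        have IH: "(fc (alpha d), fc z) \<in> R'\<^sup>*" using Suc False unfolding z_def by simp
        have step: "(fc z, fc (tau z)) \<in> R'\<^sup>*"
        proof (cases "alpha z \<in> X")
          case True then show ?thesis unfolding tau_def using fra[OF zD] by simp
        next
          case False
          have tz: "fc (tau z) = fc (alpha z)" unfolding tau_def using False fr[OF zD] by simp
          have eE: "{z, alpha z} \<in> E" using E_iff zD by blast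
          have eA': "{z, alpha z} \<notin> A"
          proof
            assume "{z, alpha z} \<in> A"
            then have "(vert z, vert (alpha z)) \<in> crel A vert" unfolding crel_def by blast
            moreover have "vert z \<in> C" using zX unfolding X_def by simp
            ultimately have "vert (alpha z) \<in> C" unfolding C_def by (meson Image_singleton_iff rtrancl.rtrancl_into_rtrancl)
            then have "alpha z \<in> X" unfolding X_def using aD zD by simp
            then show False using False by simp
          qed
          have ed: "{z, alpha z} \<noteq> {d, alpha d}"
          proof
            assume "{z, alpha z} = {d, alpha d}"
            then have "z = d \<or> z = alpha d" by (metis doubleton_eq_iff)
            then show False using zd zX adX by blast
          qed
          have "(fc z, fc (alpha z)) \<in> R'" unfolding R'_def crel_def using eE eA' ed by blast
          then show ?thesis using tz by simp
        qed
        have "(tau ^^ Suc i) d = tau z" unfolding z_def by simp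
        then show ?thesis using IH step by (metis rtrancl_trans)
      qed
    qed
  qed
  have "(fc (alpha d), fc d) \<in> R'\<^sup>*" using chain[of m] m by simp
  then show ?thesis unfolding R'_def using crel_sym by metis
qed

end


context g0 begin

lemma conn_primal:
  assumes "D \<noteq> {}"
  shows "num_components V E vert = 1"
proof -
  define S where "S = {(x, alpha x) | x. True} \<union> {(x, rho x) | x. True}"
  have conn: "\<And>d d'. d \<in> D \<Longrightarrow> d' \<in> D \<Longrightarrow> (d, d') \<in> S\<^sup>*"
    using map assms unfolding genus0_map_def S_def by auto
  have VD: "V = vert ` D" using map assms unfolding genus0_map_def by auto
  have walk: "\<And>d y. d \<in> D \<Longrightarrow> (d, y) \<in> S\<^sup>* \<Longrightarrow> y \<in> D \<and> (vert d, vert y) \<in> (crel E vert)\<^sup>*"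
  proof -
    fix d y assume d: "d \<in> D" and dy: "(d, y) \<in> S\<^sup>*"
    from dy show "y \<in> D \<and> (vert d, vert y) \<in> (crel E vert)\<^sup>*"
    proof (induction rule: rtrancl_induct)
      case base then show ?case using d by simp
    next
      case (step y z)
      then have yD: "y \<in> D" by simp
      from step.hyps(2) have "z = alpha y \<or> z = rho y" unfolding S_def by auto
      then show ?case
      proof
        assume z: "z = alpha y"
        have "{y, alpha y} \<in> E" using E_iff yD by blast
        then have "(vert y, vert z) \<in> crel E vert" unfolding crel_def z by blast
        then show ?thesis using step.IH z aD yD by (meson rtrancl.rtrancl_into_rtrancl)
      next
        assume z: "z = rho y"
        then show ?thesis using step.IH vr yD rD by simp
      qed
    qed
  qed
  have "\<And>u. u \<in> V \<Longrightarrow> (crel E vert)\<^sup>* `` {u} = V"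
  proof -
    fix u assume "u \<in> V"
    then obtain d where d: "d \<in> D" "u = vert d" using VD by blast
    show "(crel E vert)\<^sup>* `` {u} = V"
    proof
      show "(crel E vert)\<^sup>* `` {u} \<subseteq> V" using crel_V[OF EV] d vV by blast
      show "V \<subseteq> (crel E vert)\<^sup>* `` {u}" using VD walk conn d by blast
    qed
  qed
  moreover have "V \<noteq> {}" using VD assms by simp
  ultimately have "V // (crel E vert)\<^sup>* = {V}" unfolding quotient_def by auto
  then show ?thesis by (simp add: nc_def2)
qed

lemma conn_dual:
  assumes "D \<noteq> {}"
  shows "num_components U E fc = 1"
proof -
  define S where "S = {(x, alpha x) | x. True} \<union> {(x, rho x) | x. True}"
  have conn: "\<And>d d'. d \<in> D \<Longrightarrow> d' \<in> D \<Longrightarrow> (d, d') \<in> S\<^sup>*"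
    using map assms unfolding genus0_map_def S_def by auto
  have UD: "U = fc ` D" using map assms unfolding genus0_map_def by auto
  have walk: "\<And>d y. d \<in> D \<Longrightarrow> (d, y) \<in> S\<^sup>* \<Longrightarrow> y \<in> D \<and> (fc d, fc y) \<in> (crel E fc)\<^sup>*"
  proof -
    fix d y assume d: "d \<in> D" and dy: "(d, y) \<in> S\<^sup>*"
    from dy show "y \<in> D \<and> (fc d, fc y) \<in> (crel E fc)\<^sup>*"
    proof (induction rule: rtrancl_induct)
      case base then show ?case using d by simp
    next
      case (step y z)
      then have yD: "y \<in> D" by simp
      have eE: "{y, alpha y} \<in> E" using E_iff yD by blast
      then have ya: "(fc y, fc (alpha y)) \<in> crel E fc" unfolding crel_def by blast
      from step.hyps(2) have "z = alpha y \<or> z = rho y" unfolding S_def by auto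
      then show ?case
      proof
        assume z: "z = alpha y"
        then show ?thesis using step.IH ya aD yD by (meson rtrancl.rtrancl_into_rtrancl)
      next
        assume z: "z = rho y"
        then show ?thesis using step.IH ya fr yD rD by (metis rtrancl.rtrancl_into_rtrancl)
      qed
    qed
  qed
  have "\<And>u. u \<in> U \<Longrightarrow> (crel E fc)\<^sup>* `` {u} = U"
  proof -
    fix u assume "u \<in> U"
    then obtain d where d: "d \<in> D" "u = fc d" using UD by blast
    show "(crel E fc)\<^sup>* `` {u} = U"
    proof
      show "(crel E fc)\<^sup>* `` {u} \<subseteq> U" using crel_V[OF EU] d fU by blast
      show "U \<subseteq> (crel E fc)\<^sup>* `` {u}" using UD walk conn d by blast
    qed
  qed
  moreover have "U \<noteq> {}" using UD assms by simp
  ultimately have "U // (crel E fc)\<^sup>* = {U}" unfolding quotient_def by auto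
  then show ?thesis by (simp add: nc_def2)
qed

definition phi :: "'d set set \<Rightarrow> int" where
  "phi A = int (num_components U (E - A) fc) + int (card V) - 1
           - int (num_components V A vert) - int (card A)"

lemma phi_step:
  assumes AE: "A \<subseteq> E" and e: "e \<in> E" "e \<notin> A"
  shows "phi (insert e A) \<le> phi A"
proof -
  obtain d where d: "d \<in> D" "e = {d, alpha d}" using e E_iff by blast
  have finA: "finite A" using AE finE finite_subset by blast
  have AV: "\<forall>e\<in>A. vert ` e \<subseteq> V" using EV AE by blast
  have p: "num_components V (insert e A) vert
      + (if (vert d, vert (alpha d)) \<in> (crel A vert)\<^sup>* then 0 else 1) = num_components V A vert"
    using nc_insert[OF finV AV vV[OF d(1)] vV[OF aD[OF d(1)]]] d(2) by simp
  define F' where "F' = E - insert e A"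
  have F'U: "\<forall>e\<in>F'. fc ` e \<subseteq> U" using EU unfolding F'_def by blast
  have EA: "E - A = insert {d, alpha d} F'" unfolding F'_def using e d by auto
  have q: "num_components U (E - A) fc
      + (if (fc d, fc (alpha d)) \<in> (crel F' fc)\<^sup>* then 0 else 1) = num_components U F' fc"
    using nc_insert[OF finU F'U fU[OF d(1)] fU[OF aD[OF d(1)]]] EA by simp
  have tl: "(vert d, vert (alpha d)) \<notin> (crel A vert)\<^sup>* \<Longrightarrow> (fc d, fc (alpha d)) \<in> (crel F' fc)\<^sup>*"
    using tau_lemma[OF AE d(1)] e d unfolding F'_def by simp
  have c: "card (insert e A) = card A + 1" using finA e by simp
  show ?thesis unfolding phi_def F'_def[symmetric] using p q tl c
    by (cases "(vert d, vert (alpha d)) \<in> (crel A vert)\<^sup>*";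
        cases "(fc d, fc (alpha d)) \<in> (crel F' fc)\<^sup>*") (simp_all add: F'_def)
qed

lemma phi_empty: "phi {} = 0"
proof (cases "D = {}")
  case True
  then have "E = {}" unfolding map_edges_def by simp
  moreover have "card U = 1" using map True unfolding genus0_map_def by simp
  ultimately show ?thesis unfolding phi_def by (simp add: nc_empty)
next
  case False
  then show ?thesis unfolding phi_def using conn_dual by (simp add: nc_empty)
qed

lemma phi_E: "phi E = 0"
proof -
  have eul: "int (card V) - int (card E) + int (card U) = 2" using map unfolding genus0_map_def by simp
  have "num_components V E vert = 1"
  proof (cases "D = {}")
    case True
    then have "E = {}" unfolding map_edges_def by simp
    moreover have "card V = 1" using map True unfolding genus0_map_def by simp
    ultimately show ?thesis by (simp add: nc_empty)
  next
    case False then show ?thesis by (rule conn_primal)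
  qed
  then show ?thesis unfolding phi_def using eul by (simp add: nc_empty)
qed

lemma phi_zero:
  assumes "A \<subseteq> E" shows "phi A = 0"
proof -
  have finA: "finite A" using assms finE finite_subset by blast
  have le: "phi A \<le> phi {}"
    using finA assms
  proof (induction rule: finite_subset_induct')
    case empty then show ?case by simp
  next
    case (insert a F)
    then show ?case using phi_step[of F a] by simp
  qed
  have finB: "finite (E - A)" using finE by simp
  have ge: "phi E \<le> phi (E - B)" if "B \<subseteq> E" for B
    using finite_subset[OF that finE] that
  proof (induction rule: finite_subset_induct')
    case empty then show ?case by simp
  next
    case (insert b B)
    have "insert b (E - insert b B) = E - B" using insert by auto
    then have "phi (E - B) \<le> phi (E - insert b B)" using phi_step[of "E - insert b B" b] insert by auto
    then show ?case using insert by simp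
  qed
  have "E - (E - A) = A" using assms by auto
  then have "phi E \<le> phi A" using ge[of "E - A"] by simp
  then show ?thesis using le phi_empty phi_E by simp
qed

lemma euler_sub:
  assumes "A \<subseteq> E"
  shows "num_components U (E - A) fc + card V = 1 + num_components V A vert + card A"
  using phi_zero[OF assms] unfolding phi_def by simp

end


lemma pow_card_prod:
  fixes a :: "'a::comm_monoid_mult"
  assumes "finite E" "X \<subseteq> E"
  shows "a ^ card X = (\<Prod>e\<in>E. if e \<in> X then a else 1)"
proof -
  have "(\<Prod>e\<in>E. if e \<in> X then a else 1) = (\<Prod>e\<in>E \<inter> X. a)"
    using assms(1) by (simp add: prod.If_cases Int_def)
  also have "E \<inter> X = X" using assms(2) by auto
  finally show ?thesis by simp
qed

lemma sum_pow_prod: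
  fixes G :: "'e \<Rightarrow> bool \<Rightarrow> 'a::comm_semiring_1"
  assumes "finite E"
  shows "(\<Sum>X\<in>Pow E. \<Prod>e\<in>E. G e (e \<in> X)) = (\<Prod>e\<in>E. G e True + G e False)"
proof -
  have "(\<Prod>e\<in>E. G e True + G e False) = (\<Sum>X\<in>Pow E. (\<Prod>e\<in>X. G e True) * (\<Prod>e\<in>E - X. G e False))"
    by (rule prod_add[OF assms])
  also have "\<dots> = (\<Sum>X\<in>Pow E. \<Prod>e\<in>E. G e (e \<in> X))"
  proof (rule sum.cong[OF refl])
    fix X assume "X \<in> Pow E"
    then have XE: "X \<subseteq> E" by simp
    have fX: "finite X" using finite_subset[OF XE assms] .
    have "(\<Prod>e\<in>E. G e (e \<in> X)) = (\<Prod>e\<in>X \<union> (E - X). G e (e \<in> X))"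
      using XE by (simp add: Un_absorb1 Un_Diff_cancel)
    also have "\<dots> = (\<Prod>e\<in>X. G e (e \<in> X)) * (\<Prod>e\<in>E - X. G e (e \<in> X))"
      by (rule prod.union_disjoint) (use fX assms in auto)
    also have "\<dots> = (\<Prod>e\<in>X. G e True) * (\<Prod>e\<in>E - X. G e False)"
    proof -
      have "(\<Prod>e\<in>X. G e (e \<in> X)) = (\<Prod>e\<in>X. G e True)" by (rule prod.cong) auto
      moreover have "(\<Prod>e\<in>E - X. G e (e \<in> X)) = (\<Prod>e\<in>E - X. G e False)" by (rule prod.cong) auto
      ultimately show ?thesis by simp
    qed
    finally show "(\<Prod>e\<in>X. G e True) * (\<Prod>e\<in>E - X. G e False) = (\<Prod>e\<in>E. G e (e \<in> X))" by simp
  qed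
  finally show ?thesis by simp
qed

lemma prod_indicator:
  assumes "finite E"
  shows "(\<Prod>e\<in>E. if P e then (1::'a::comm_semiring_1) else 0) = (if \<forall>e\<in>E. P e then 1 else 0)"
  using assms by (induction rule: finite_induct) auto

lemma sum_indicator:
  assumes "finite A"
  shows "(\<Sum>x\<in>A. if P x then (1::'a::comm_semiring_1) else 0) = of_nat (card {x\<in>A. P x})"
  using assms by (simp add: sum.If_cases Int_def)

definition agree :: "('d \<Rightarrow> 'x) \<Rightarrow> ('x \<Rightarrow> complex) \<Rightarrow> 'd set \<Rightarrow> bool" where
  "agree lab s e \<longleftrightarrow> (\<forall>x\<in>e. \<forall>y\<in>e. s (lab x) = s (lab y))"

lemma disagree_eq: "disagree F lab s = {e \<in> F. \<not> agree lab s e}"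
  unfolding disagree_def agree_def by blast

lemma prod_expand:
  fixes al be :: "'a::comm_ring_1"
  assumes "finite w"
  shows "(\<Prod>e\<in>w. if P e then al + be else al)
       = (\<Sum>S\<in>Pow w. be ^ card S * al ^ card (w - S) * (if \<forall>e\<in>S. P e then 1 else 0))"
proof -
  have "(\<Prod>e\<in>w. if P e then al + be else al) = (\<Prod>e\<in>w. (if P e then be else 0) + al)"
    by (rule prod.cong) auto
  also have "\<dots> = (\<Sum>S\<in>Pow w. (\<Prod>e\<in>S. if P e then be else 0) * (\<Prod>e\<in>w - S. al))"
    by (rule prod_add[OF assms])
  also have "\<dots> = (\<Sum>S\<in>Pow w. be ^ card S * al ^ card (w - S) * (if \<forall>e\<in>S. P e then 1 else 0))"
  proof (rule sum.cong[OF refl])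
    fix S assume "S \<in> Pow w"
    then have fS: "finite S" using assms finite_subset by auto
    have "(\<Prod>e\<in>S. if P e then be else 0) = be ^ card S * (if \<forall>e\<in>S. P e then 1 else 0)"
      using fS by (induction rule: finite_induct) auto
    then show "(\<Prod>e\<in>S. if P e then be else 0) * (\<Prod>e\<in>w - S. al)
        = be ^ card S * al ^ card (w - S) * (if \<forall>e\<in>S. P e then 1 else 0)" by simp
  qed
  finally show ?thesis .
qed



lemma edge_id:
  fixes a b :: real
  assumes "\<not> (dt \<and> ds)"
  shows "(if dt then a else 1) * (if ds then b else 1) *
     ((if dt then (if eo \<and> \<not> True then 1 else 0) else if ds then (if \<not> eo \<and> True then 1 else 0) else free_pair_prob a b eo True)
    + (if dt then (if eo \<and> \<not> False then 1 else 0) else if ds then (if \<not> eo \<and> False then 1 else 0) else free_pair_prob a b eo False))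
   = (if eo then (if ds then 0 else 1) else 1) * (if eo then (if \<not> dt then 1 - b else a) else (if \<not> dt then b else 0))"
  using assms by (cases dt; cases ds; cases eo) (auto simp: free_pair_prob_def)

definition F1 :: "'d set set \<Rightarrow> ('d \<Rightarrow> 'v) \<Rightarrow> ('v \<Rightarrow> complex) \<Rightarrow> 'd set \<Rightarrow> real" where
  "F1 w vert s e = (if e \<in> w then (if agree vert s e then 1 else 0) else 1)"

definition F2 :: "real \<Rightarrow> real \<Rightarrow> 'd set set \<Rightarrow> ('d \<Rightarrow> 'u) \<Rightarrow> ('u \<Rightarrow> complex) \<Rightarrow> 'd set \<Rightarrow> real" where
  "F2 a b w fc t e = (if e \<in> w then (if agree fc t e then 1 - b else a) else (if agree fc t e then b else 0))"

context g0 begin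

lemma num_factor:
  fixes a b :: real and Q Q' :: "complex set"
  assumes wE: "w \<subseteq> E" and fQ: "finite Q" "finite Q'"
  shows "(\<Sum>(s, t) \<in> spin_configs E V vert U fc Q Q'. \<Sum>wd \<in> Pow E.
        spin_weight E vert fc a b s t * perc_cond E vert fc a b s t w wd)
     = (\<Sum>s\<in>V \<rightarrow>\<^sub>E Q. \<Prod>e\<in>E. F1 w vert s e) * (\<Sum>t\<in>U \<rightarrow>\<^sub>E Q'. \<Prod>e\<in>E. F2 a b w fc t e)"
proof -
  have hterm: "(\<Sum>wd \<in> Pow E. spin_weight E vert fc a b s t * perc_cond E vert fc a b s t w wd)
      = (\<Prod>e\<in>E. F1 w vert s e * F2 a b w fc t e)"
    if st: "disagree E vert s \<inter> disagree E fc t = {}" for s t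
  proof -
    define G where "G = (\<lambda>e du. if e \<in> disagree E fc t then (if e \<in> w \<and> \<not> du then 1 else 0)
             else if e \<in> disagree E vert s then (if e \<notin> w \<and> du then 1 else 0)
             else free_pair_prob a b (e \<in> w) du)"
    have pc: "perc_cond E vert fc a b s t w wd = (\<Prod>e\<in>E. G e (e \<in> wd))" for wd
      unfolding perc_cond_def G_def by simp
    have sw: "spin_weight E vert fc a b s t
        = (\<Prod>e\<in>E. (if e \<in> disagree E fc t then a else 1) * (if e \<in> disagree E vert s then b else 1))"
      unfolding spin_weight_def prod.distrib
      using pow_card_prod[OF finE, of "disagree E fc t" a] pow_card_prod[OF finE, of "disagree E vert s" b]
      by (simp add: disagree_def)
    have "(\<Sum>wd \<in> Pow E. spin_weight E vert fc a b s t * perc_cond E vert fc a b s t w wd)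
        = spin_weight E vert fc a b s t * (\<Sum>wd \<in> Pow E. \<Prod>e\<in>E. G e (e \<in> wd))"
      unfolding pc by (simp add: sum_distrib_left)
    also have "\<dots> = spin_weight E vert fc a b s t * (\<Prod>e\<in>E. G e True + G e False)"
      by (simp add: sum_pow_prod[OF finE])
    also have "\<dots> = (\<Prod>e\<in>E. (if e \<in> disagree E fc t then a else 1) * (if e \<in> disagree E vert s then b else 1)
                     * (G e True + G e False))"
      unfolding sw prod.distrib by simp
    also have "\<dots> = (\<Prod>e\<in>E. F1 w vert s e * F2 a b w fc t e)"
    proof (rule prod.cong[OF refl])
      fix e assume eE: "e \<in> E"
      have nd: "\<not> (e \<in> disagree E fc t \<and> e \<in> disagree E vert s)" using st by blast
      have ag1: "agree vert s e \<longleftrightarrow> e \<notin> disagree E vert s" using eE by (simp add: disagree_eq)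
      have ag2: "agree fc t e \<longleftrightarrow> e \<notin> disagree E fc t" using eE by (simp add: disagree_eq)
      show "(if e \<in> disagree E fc t then a else 1) * (if e \<in> disagree E vert s then b else 1)
                     * (G e True + G e False) = F1 w vert s e * F2 a b w fc t e"
        unfolding G_def F1_def F2_def ag1 ag2 using edge_id[OF nd, of a b "e \<in> w"] by simp
    qed
    finally show ?thesis .
  qed
  define P where "P = (V \<rightarrow>\<^sub>E Q) \<times> (U \<rightarrow>\<^sub>E Q')"
  have sub: "spin_configs E V vert U fc Q Q' \<subseteq> P" unfolding spin_configs_def P_def by auto
  have zero: "(\<Prod>e\<in>E. F1 w vert s e * F2 a b w fc t e) = 0"
    if "(s, t) \<in> P - spin_configs E V vert U fc Q Q'" for s t
  proof -
    from that obtain e where e: "e \<in> disagree E vert s" "e \<in> disagree E fc t"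
      unfolding P_def spin_configs_def by auto
    have "F1 w vert s e * F2 a b w fc t e = 0" using e unfolding F1_def F2_def by (simp add: disagree_eq)
    moreover have "e \<in> E" using e unfolding disagree_def by simp
    ultimately show ?thesis using finE by (meson prod_zero)
  qed
  have finP: "finite P" unfolding P_def using finV finU fQ by (simp add: finite_PiE)
  have "(\<Sum>(s, t) \<in> spin_configs E V vert U fc Q Q'. \<Sum>wd \<in> Pow E.
        spin_weight E vert fc a b s t * perc_cond E vert fc a b s t w wd)
      = (\<Sum>(s, t) \<in> spin_configs E V vert U fc Q Q'. \<Prod>e\<in>E. F1 w vert s e * F2 a b w fc t e)"
    by (rule sum.cong[OF refl]) (auto simp: spin_configs_def hterm)
  also have "\<dots> = (\<Sum>(s, t) \<in> P. \<Prod>e\<in>E. F1 w vert s e * F2 a b w fc t e)"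
    by (rule sum.mono_neutral_left[OF finP sub]) (use zero in auto)
  also have "\<dots> = (\<Sum>s\<in>V \<rightarrow>\<^sub>E Q. \<Sum>t\<in>U \<rightarrow>\<^sub>E Q'. (\<Prod>e\<in>E. F1 w vert s e) * (\<Prod>e\<in>E. F2 a b w fc t e))"
    unfolding P_def sum.cartesian_product[symmetric] by (simp add: prod.distrib)
  also have "\<dots> = (\<Sum>s\<in>V \<rightarrow>\<^sub>E Q. \<Prod>e\<in>E. F1 w vert s e) * (\<Sum>t\<in>U \<rightarrow>\<^sub>E Q'. \<Prod>e\<in>E. F2 a b w fc t e)"
    by (simp add: sum_product)
  finally show ?thesis .
qed

end


lemma sum_count:
  fixes V :: "'v set" and lab :: "'d \<Rightarrow> 'v" and Q :: "complex set"
  assumes "finite V" "\<forall>e\<in>F. lab ` e \<subseteq> V" "finite Q"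
  shows "(\<Sum>s\<in>V \<rightarrow>\<^sub>E Q. if \<forall>e\<in>F. agree lab s e then 1 else 0)
          = (real (card Q)) ^ num_components V F lab"
proof -
  have fin: "finite (V \<rightarrow>\<^sub>E Q)" using assms by (simp add: finite_PiE)
  have "(\<Sum>s\<in>V \<rightarrow>\<^sub>E Q. if \<forall>e\<in>F. agree lab s e then 1 else 0)
      = real (card {s \<in> V \<rightarrow>\<^sub>E Q. \<forall>e\<in>F. agree lab s e})"
    using sum_indicator[OF fin, where 'a=real, of "\<lambda>s. \<forall>e\<in>F. agree lab s e"] by simp
  also have "{s \<in> V \<rightarrow>\<^sub>E Q. \<forall>e\<in>F. agree lab s e}
      = {s \<in> V \<rightarrow>\<^sub>E Q. \<forall>e\<in>F. \<forall>x\<in>e. \<forall>y\<in>e. s (lab x) = s (lab y)}" unfolding agree_def by simp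
  also have "card \<dots> = card Q ^ num_components V F lab" by (rule count_agree[OF assms])
  finally show ?thesis by simp
qed

context g0 begin

lemma S1:
  fixes Q :: "complex set"
  assumes wE: "w \<subseteq> E" and fQ: "finite Q"
  shows "(\<Sum>s\<in>V \<rightarrow>\<^sub>E Q. \<Prod>e\<in>E. F1 w vert s e) = real (card Q) ^ num_components V w vert"
proof -
  have "(\<Prod>e\<in>E. F1 w vert s e) = (if \<forall>e\<in>w. agree vert s e then 1 else 0)" for s
  proof -
    have "(\<Prod>e\<in>E. F1 w vert s e) = (\<Prod>e\<in>E. if e \<notin> w \<or> agree vert s e then 1 else 0)"
      unfolding F1_def by (rule prod.cong) auto
    also have "\<dots> = (if \<forall>e\<in>E. e \<notin> w \<or> agree vert s e then 1 else 0)" by (rule prod_indicator[OF finE])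
    also have "(\<forall>e\<in>E. e \<notin> w \<or> agree vert s e) = (\<forall>e\<in>w. agree vert s e)" using wE by auto
    finally show ?thesis .
  qed
  then have "(\<Sum>s\<in>V \<rightarrow>\<^sub>E Q. \<Prod>e\<in>E. F1 w vert s e) = (\<Sum>s\<in>V \<rightarrow>\<^sub>E Q. if \<forall>e\<in>w. agree vert s e then 1 else 0)"
    by simp
  also have "\<dots> = real (card Q) ^ num_components V w vert"
    by (rule sum_count[OF finV _ fQ]) (use EV wE in blast)
  finally show ?thesis .
qed

lemma S2:
  fixes Q' :: "complex set" and a b :: real
  assumes wE: "w \<subseteq> E" and fQ: "finite Q'"
  shows "real (card Q') ^ card V * (\<Sum>t\<in>U \<rightarrow>\<^sub>E Q'. \<Prod>e\<in>E. F2 a b w fc t e)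
     = b ^ card (E - w) * (\<Sum>A\<in>Pow w. (1 - a - b) ^ card (w - A) * a ^ card A
          * real (card Q') ^ (1 + num_components V A vert + card A))"
proof -
  define c0 where "c0 = 1 - a - b"
  define q' where "q' = real (card Q')"
  have finw: "finite w" using wE finE finite_subset by blast
  have prodF2: "(\<Prod>e\<in>E. F2 a b w fc t e) = b ^ card (E - w) *
       (\<Sum>S\<in>Pow w. c0 ^ card S * a ^ card (w - S) * (if \<forall>e\<in>(E - w) \<union> S. agree fc t e then 1 else 0))" for t
  proof -
    have "(\<Prod>e\<in>E. F2 a b w fc t e) = (\<Prod>e\<in>w. F2 a b w fc t e) * (\<Prod>e\<in>E - w. F2 a b w fc t e)"
      using prod.subset_diff[OF wE finE] by (simp add: mult.commute)
    also have "(\<Prod>e\<in>E - w. F2 a b w fc t e) = (\<Prod>e\<in>E - w. if agree fc t e then b else 0)"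
      unfolding F2_def by (rule prod.cong) auto
    also have "\<dots> = b ^ card (E - w) * (if \<forall>e\<in>E - w. agree fc t e then 1 else 0)"
    proof -
      have "finite (E - w)" using finE by simp
      then show ?thesis by (induction rule: finite_induct) auto
    qed
    also have "(\<Prod>e\<in>w. F2 a b w fc t e) = (\<Prod>e\<in>w. if agree fc t e then a + c0 else a)"
      unfolding F2_def c0_def by (rule prod.cong) auto
    also have "\<dots> = (\<Sum>S\<in>Pow w. c0 ^ card S * a ^ card (w - S) * (if \<forall>e\<in>S. agree fc t e then 1 else 0))"
      by (rule prod_expand[OF finw])
    finally have X: "(\<Prod>e\<in>E. F2 a b w fc t e) = (\<Sum>S\<in>Pow w. c0 ^ card S * a ^ card (w - S) * (if \<forall>e\<in>S. agree fc t e then 1 else 0))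
       * (b ^ card (E - w) * (if \<forall>e\<in>E - w. agree fc t e then 1 else 0))" .
    show ?thesis unfolding X sum_distrib_right sum_distrib_left
      by (rule sum.cong[OF refl]) (auto simp: ball_Un)
  qed
  have cnt: "(\<Sum>t\<in>U \<rightarrow>\<^sub>E Q'. if \<forall>e\<in>(E - w) \<union> S. agree fc t e then 1 else 0)
      = q' ^ num_components U (E - (w - S)) fc" if "S \<in> Pow w" for S
  proof -
    have "(E - w) \<union> S = E - (w - S)" using that wE by auto
    moreover have "\<forall>e\<in>E - (w - S). fc ` e \<subseteq> U" using EU by blast
    ultimately show ?thesis unfolding q'_def using sum_count[OF finU _ fQ] by simp
  qed
  have eul: "q' ^ card V * q' ^ num_components U (E - (w - S)) fc
      = q' ^ (1 + num_components V (w - S) vert + card (w - S))" if "S \<in> Pow w" for S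
  proof -
    have "w - S \<subseteq> E" using wE by auto
    from euler_sub[OF this] show ?thesis by (metis power_add add.commute)
  qed
  have "q' ^ card V * (\<Sum>t\<in>U \<rightarrow>\<^sub>E Q'. \<Prod>e\<in>E. F2 a b w fc t e)
     = q' ^ card V * (b ^ card (E - w) * (\<Sum>S\<in>Pow w. c0 ^ card S * a ^ card (w - S) *
         (\<Sum>t\<in>U \<rightarrow>\<^sub>E Q'. if \<forall>e\<in>(E - w) \<union> S. agree fc t e then 1 else 0)))"
    unfolding prodF2 by (simp add: sum_distrib_left sum_distrib_right mult_ac sum.swap[of _ "U \<rightarrow>\<^sub>E Q'"])
  also have "\<dots> = b ^ card (E - w) * (\<Sum>S\<in>Pow w. c0 ^ card S * a ^ card (w - S) *
         (q' ^ card V * (\<Sum>t\<in>U \<rightarrow>\<^sub>E Q'. if \<forall>e\<in>(E - w) \<union> S. agree fc t e then 1 else 0)))"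
    by (simp add: sum_distrib_left mult_ac)
  also have "\<dots> = b ^ card (E - w) * (\<Sum>S\<in>Pow w. c0 ^ card S * a ^ card (w - S) *
         q' ^ (1 + num_components V (w - S) vert + card (w - S)))"
  proof -
    have "(\<Sum>S\<in>Pow w. c0 ^ card S * a ^ card (w - S) *
         (q' ^ card V * (\<Sum>t\<in>U \<rightarrow>\<^sub>E Q'. if \<forall>e\<in>(E - w) \<union> S. agree fc t e then 1 else 0)))
      = (\<Sum>S\<in>Pow w. c0 ^ card S * a ^ card (w - S) *
         q' ^ (1 + num_components V (w - S) vert + card (w - S)))"
    proof (rule sum.cong[OF refl])
      fix S assume S: "S \<in> Pow w"
      show "c0 ^ card S * a ^ card (w - S) *
         (q' ^ card V * (\<Sum>t\<in>U \<rightarrow>\<^sub>E Q'. if \<forall>e\<in>(E - w) \<union> S. agree fc t e then 1 else 0))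
        = c0 ^ card S * a ^ card (w - S) * q' ^ (1 + num_components V (w - S) vert + card (w - S))"
        unfolding cnt[OF S] eul[OF S] ..
    qed
    then show ?thesis by simp
  qed
  also have "(\<Sum>S\<in>Pow w. c0 ^ card S * a ^ card (w - S) *
         q' ^ (1 + num_components V (w - S) vert + card (w - S)))
      = (\<Sum>A\<in>Pow w. c0 ^ card (w - A) * a ^ card A * q' ^ (1 + num_components V A vert + card A))"
  proof (rule sum.reindex_bij_witness[of _ "\<lambda>A. w - A" "\<lambda>A. w - A"])
    fix A assume "A \<in> Pow w"
    then have "w - (w - A) = A" by auto
    then show "w - (w - A) = A" "w - A \<in> Pow w"
      "c0 ^ card (w - (w - A)) * a ^ card (w - A) * q' ^ (1 + num_components V (w - A) vert + card (w - A))
       = c0 ^ card A * a ^ card (w - A) * q' ^ (1 + num_components V (w - A) vert + card (w - A))" by auto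
  qed (auto)
  finally show ?thesis unfolding c0_def q'_def .
qed

lemma S3:
  fixes Q' :: "complex set" and x :: real
  assumes wE: "w \<subseteq> E" and fQ: "finite Q'"
  shows "potts_Z V w vert Q' x = (\<Sum>A\<in>Pow w. (1 - inverse (1 + x)) ^ card A * inverse (1 + x) ^ card (w - A)
          * real (card Q') ^ num_components V A vert)"
proof -
  define p where "p = inverse (1 + x)"
  have finw: "finite w" using wE finE finite_subset by blast
  have fin: "finite (V \<rightarrow>\<^sub>E Q')" using finV fQ by (simp add: finite_PiE)
  have "inverse ((1 + x) ^ card (disagree w vert s))
     = (\<Sum>A\<in>Pow w. (1 - p) ^ card A * p ^ card (w - A) * (if \<forall>e\<in>A. agree vert s e then 1 else 0))" for s
  proof -
    have "inverse ((1 + x) ^ card (disagree w vert s)) = p ^ card (disagree w vert s)"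
      unfolding p_def by (simp add: power_inverse)
    also have "\<dots> = (\<Prod>e\<in>w. if e \<in> disagree w vert s then p else 1)"
      by (rule pow_card_prod[OF finw]) (auto simp: disagree_def)
    also have "\<dots> = (\<Prod>e\<in>w. if agree vert s e then p + (1 - p) else p)"
      by (rule prod.cong) (auto simp: disagree_eq)
    also have "\<dots> = (\<Sum>A\<in>Pow w. (1 - p) ^ card A * p ^ card (w - A) * (if \<forall>e\<in>A. agree vert s e then 1 else 0))"
      by (rule prod_expand[OF finw])
    finally show ?thesis .
  qed
  then have "potts_Z V w vert Q' x = (\<Sum>s\<in>V \<rightarrow>\<^sub>E Q'. \<Sum>A\<in>Pow w. (1 - p) ^ card A * p ^ card (w - A)
        * (if \<forall>e\<in>A. agree vert s e then 1 else 0))"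
    unfolding potts_Z_def by simp
  also have "\<dots> = (\<Sum>A\<in>Pow w. (1 - p) ^ card A * p ^ card (w - A)
        * (\<Sum>s\<in>V \<rightarrow>\<^sub>E Q'. if \<forall>e\<in>A. agree vert s e then 1 else 0))"
    by (simp add: sum.swap[of _ "V \<rightarrow>\<^sub>E Q'"] sum_distrib_left)
  also have "\<dots> = (\<Sum>A\<in>Pow w. (1 - p) ^ card A * p ^ card (w - A) * real (card Q') ^ num_components V A vert)"
  proof (rule sum.cong[OF refl])
    fix A assume "A \<in> Pow w"
    then have h: "\<forall>e\<in>A. vert ` e \<subseteq> V" using EV wE by blast
    have "(\<Sum>s\<in>V \<rightarrow>\<^sub>E Q'. if \<forall>e\<in>A. agree vert s e then 1 else 0) = real (card Q') ^ num_components V A vert"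
      by (rule sum_count[OF finV h fQ])
    then show "(1 - p) ^ card A * p ^ card (w - A) * (\<Sum>s\<in>V \<rightarrow>\<^sub>E Q'. if \<forall>e\<in>A. agree vert s e then 1 else 0)
        = (1 - p) ^ card A * p ^ card (w - A) * real (card Q') ^ num_components V A vert"
      by simp
  qed
  finally show ?thesis unfolding p_def .
qed

end


lemma key_identity:
  fixes a b q' :: real and w E :: "'e set" and kk :: "'e set \<Rightarrow> nat"
  assumes wE: "w \<subseteq> E" and finE: "finite E" and a: "0 < a" "a \<le> 1" and b: "0 < b" "b \<le> 1"
    and c0: "1 - a - b \<noteq> 0" and q': "1 \<le> q'"
  shows "b ^ card (E - w) * (\<Sum>A\<in>Pow w. (1 - a - b) ^ card (w - A) * a ^ card A * q' ^ (1 + kk A + card A))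
    = b ^ card E * q' * ((1 - (1 - q') * a - b) / b) ^ card w
      * (\<Sum>A\<in>Pow w. (1 - inverse (1 + q' * a / (1 - a - b))) ^ card A
           * inverse (1 + q' * a / (1 - a - b)) ^ card (w - A) * q' ^ kk A)"
proof -
  define c0 where "c0 = 1 - a - b"
  define y where "y = (1 - (1 - q') * a - b) / b"
  define p where "p = inverse (1 + q' * a / (1 - a - b))"
  have finw: "finite w" using wE finE finite_subset by blast
  have yeq: "y = (c0 + q' * a) / b" unfolding y_def c0_def by (simp add: algebra_simps)
  have cE: "card E = card (E - w) + card w" using wE finE
    by (metis add.commute card_Diff_subset card_mono finite_subset le_add_diff_inverse)
  have cw: "card w = card A + card (w - A)" if "A \<in> Pow w" for A
    using that finw by (metis Pow_iff card_Diff_subset card_mono finite_subset le_add_diff_inverse)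
  show ?thesis
  proof (cases "c0 + q' * a = 0")
    case False
    have p: "p = c0 / (c0 + q' * a)" unfolding p_def c0_def using c0 False[unfolded c0_def]
      by (simp add: field_simps)
    have by0: "b * y = c0 + q' * a" unfolding yeq using b by simp
    have byp: "b * y * p = c0" unfolding by0 p using False by simp
    have "1 - p = q' * a / (c0 + q' * a)" unfolding p using False by (simp add: field_simps)
    then have by1p: "b * y * (1 - p) = q' * a" unfolding by0 using False by simp
    have "b ^ card E * q' * y ^ card w * (\<Sum>A\<in>Pow w. (1 - p) ^ card A * p ^ card (w - A) * q' ^ kk A)
        = b ^ card (E - w) * (\<Sum>A\<in>Pow w. c0 ^ card (w - A) * a ^ card A * q' ^ (1 + kk A + card A))"
      unfolding sum_distrib_left
    proof (rule sum.cong[OF refl])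
      fix A assume A: "A \<in> Pow w"
      have "b ^ card E * q' * y ^ card w * ((1 - p) ^ card A * p ^ card (w - A) * q' ^ kk A)
          = b ^ card (E - w) * q' * q' ^ kk A * ((b * y * (1 - p)) ^ card A * (b * y * p) ^ card (w - A))"
        unfolding cE cw[OF A] power_add power_mult_distrib by (simp add: mult_ac)
      also have "\<dots> = b ^ card (E - w) * (c0 ^ card (w - A) * a ^ card A * q' ^ (1 + kk A + card A))"
        unfolding byp by1p power_add power_mult_distrib by (simp add: mult_ac)
      finally show "b ^ card E * q' * y ^ card w * ((1 - p) ^ card A * p ^ card (w - A) * q' ^ kk A)
          = b ^ card (E - w) * (c0 ^ card (w - A) * a ^ card A * q' ^ (1 + kk A + card A))" .
    qed
    then show ?thesis unfolding c0_def y_def p_def by simp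
  next
    case True
    have "(q' - 1) * a = b - 1" using True unfolding c0_def by (simp add: algebra_simps)
    moreover have "0 \<le> (q' - 1) * a" using q' a by simp
    ultimately have b1: "b = 1" using b by linarith
    then have "(q' - 1) * a = 0" using \<open>(q' - 1) * a = b - 1\<close> by simp
    then have q1: "q' = 1" using a by simp
    have y0: "y = 0" unfolding yeq using True by simp
    show ?thesis
    proof (cases "w = {}")
      case True then show ?thesis by simp
    next
      case False
      then have cw0: "card w \<noteq> 0" using finw by simp
      have "(\<Sum>A\<in>Pow w. c0 ^ card (w - A) * a ^ card A * q' ^ (1 + kk A + card A))
          = (\<Sum>A\<in>Pow w. (\<Prod>e\<in>A. a) * (\<Prod>e\<in>w - A. c0))"
        using q1 by (simp add: mult.commute)
      also have "\<dots> = (\<Prod>e\<in>w. a + c0)" by (rule prod_add[OF finw, symmetric])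
      also have "\<dots> = 0" using b1 cw0 unfolding c0_def by simp
      finally have "(\<Sum>A\<in>Pow w. c0 ^ card (w - A) * a ^ card A * q' ^ (1 + kk A + card A)) = 0" .
      moreover have "y ^ card w = 0" using y0 cw0 by simp
      ultimately show ?thesis unfolding c0_def y_def p_def by simp
    qed
  qed
qed



theorem proposition3p3:
  fixes D :: "'d set" and alpha rho :: "'d \<Rightarrow> 'd"
    and V :: "'v set" and vert :: "'d \<Rightarrow> 'v" and U :: "'u set" and fc :: "'d \<Rightarrow> 'u"
    and Q Q' :: "complex set" and a b :: real
  assumes map: "genus0_map D alpha rho V vert U fc"
    and "finite Q" "Q \<noteq> {}" "uminus ` Q = Q"
    and "finite Q'" "Q' \<noteq> {}" "uminus ` Q' = Q'"
    and "0 < a" "a \<le> 1" "0 < b" "b \<le> 1" "a + b \<noteq> 1"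
  shows "\<exists>c. \<forall>w \<subseteq> map_edges D alpha.
     omega_marginal (map_edges D alpha) V vert U fc Q Q' a b w =
       c * (real (card Q) ^ num_components V w vert
            * ((1 - (1 - real (card Q')) * a - b) / b) ^ card w
            * potts_Z V w vert Q' (real (card Q') * a / (1 - a - b)))"
proof -
  interpret g0 D alpha rho V vert U fc using map by unfold_locales
  note as = assms
  define q' where "q' = real (card Q')"
  define Den where "Den = (\<Sum>(s, t) \<in> spin_configs E V vert U fc Q Q'. spin_weight E vert fc a b s t)"
  define K where "K = b ^ card E * q' / q' ^ card V"
  have q'1: "1 \<le> q'" unfolding q'_def using as(5,6) by (simp add: Suc_leI card_gt_0_iff)
  have c0: "1 - a - b \<noteq> 0" using as(12) by simp
  show ?thesis
  proof (intro exI[of _ "K / Den"] allI impI)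
    fix w assume wE: "w \<subseteq> E"
    define T where "T = (\<Sum>t\<in>U \<rightarrow>\<^sub>E Q'. \<Prod>e\<in>E. F2 a b w fc t e)"
    have num: "(\<Sum>(s, t) \<in> spin_configs E V vert U fc Q Q'. \<Sum>wd \<in> Pow E.
        spin_weight E vert fc a b s t * perc_cond E vert fc a b s t w wd)
        = real (card Q) ^ num_components V w vert * T"
      using num_factor[OF wE as(2,5), of a b] S1[OF wE as(2)] unfolding T_def by simp
    have s2: "q' ^ card V * T = b ^ card (E - w) * (\<Sum>A\<in>Pow w. (1 - a - b) ^ card (w - A) * a ^ card A
          * q' ^ (1 + num_components V A vert + card A))"
      using S2[OF wE as(5), of a b] unfolding T_def q'_def .
    have s3: "potts_Z V w vert Q' (q' * a / (1 - a - b)) = (\<Sum>A\<in>Pow w. (1 - inverse (1 + q' * a / (1 - a - b))) ^ card A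
          * inverse (1 + q' * a / (1 - a - b)) ^ card (w - A) * q' ^ num_components V A vert)"
      using S3[OF wE as(5)] unfolding q'_def .
    have key: "q' ^ card V * T = b ^ card E * q' * ((1 - (1 - q') * a - b) / b) ^ card w
        * potts_Z V w vert Q' (q' * a / (1 - a - b))"
      unfolding s2 s3 by (rule key_identity[OF wE finE as(8,9,10,11) c0 q'1])
    have qV: "q' ^ card V \<noteq> 0" using q'1 by simp
    have T: "T = K * (((1 - (1 - q') * a - b) / b) ^ card w * potts_Z V w vert Q' (q' * a / (1 - a - b)))"
    proof -
      have "T = (q' ^ card V * T) / q' ^ card V" using qV by simp
      also have "\<dots> = (b ^ card E * q' * (((1 - (1 - q') * a - b) / b) ^ card w
        * potts_Z V w vert Q' (q' * a / (1 - a - b)))) / q' ^ card V" unfolding key by (simp add: mult.assoc)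
      also have "\<dots> = K * (((1 - (1 - q') * a - b) / b) ^ card w * potts_Z V w vert Q' (q' * a / (1 - a - b)))"
        unfolding K_def by simp
      finally show ?thesis .
    qed
    show "omega_marginal E V vert U fc Q Q' a b w =
       K / Den * (real (card Q) ^ num_components V w vert
            * ((1 - (1 - real (card Q')) * a - b) / b) ^ card w
            * potts_Z V w vert Q' (real (card Q') * a / (1 - a - b)))"
      unfolding omega_marginal_def num Den_def[symmetric] T q'_def[symmetric] by simp
  qed
qed


end
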